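(* Let $\mu\in\mathbb{R}\setminus\{0\}$ and let $X$ have the skew-symmetric-Laplace-uniform density $g$ with parameter $\mu$ (defined in the context), and write $\mu'_k=E(X^k)$. If $\mu>0$, then $$\mu'_1=\frac{2}{\mu}-\left(1+\frac{2}{\mu}\right)e^{-\mu},\quad \mu'_2=2,\quad \mu'_3=\frac{24}{\mu}-e^{-\mu}\left[\mu^2+6\mu+18+\frac{24}{\mu}\right],\quad \mu'_4=24.$$ If $\mu<0$, the same formulas hold after replacing $\mu$ by $-\mu$ in each expression and additionally multiplying the expressions for the odd-order moments $\mu'_1,\mu'_3$ by $-1$. Furthermore, for every $\mu\neq 0$ and every integer $r\ge 1$, $\mu'_{2r}=(2r)!$.
   Context: For $\mu\in\mathbb{R}\setminus\{0\}$, the skew-symmetric-Laplace-uniform distribution $SSLUD(\mu)$ is the distribution on $\mathbb{R}$ with density $$g(x)=\begin{cases} 0 & \text{if } x/\mu<-1,\\ e^{-|x|}\left(\dfrac{x}{2\mu}+\dfrac12\right) & \text{if } -1\le x/\mu<1,\\ e^{-|x|} & \text{if } x/\mu\ge 1.\end{cases}$$ *)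

theory Defs
  imports "HOL-Probability.Probability"
begin

definition sslud_density :: "real \<Rightarrow> real \<Rightarrow> real" where
  "sslud_density \<mu> x =
     (if x / \<mu> < -1 then 0
      else if x / \<mu> < 1 then exp (- \<bar>x\<bar>) * (x / (2 * \<mu>) + 1 / 2)
      else exp (- \<bar>x\<bar>))"

end

theory Submission
  imports Defs
begin

lemma P1: "has_bochner_integral lborel (\<lambda>x::real. indicator {0..} x * (x^k * exp (-x))) (fact k)"
proof (rule has_bochner_integral_nn_integral)
  show "(\<integral>\<^sup>+x. ennreal (indicator {0..} x * (x^k * exp (-x))) \<partial>lborel) = ennreal (fact k)"
    using nn_intergal_power_times_exp_Ici[of k]
    by (simp add: indicator_mult_ennreal mult.commute)
qed (auto split: split_indicator)

lemma P2:
  assumes "0 \<le> a"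
  shows "has_bochner_integral lborel (\<lambda>x::real. indicator {0..a} x * (x^k * exp (-x)))
     ((1 - (\<Sum>n\<le>k. (a^n * exp (-a)) / fact n)) * fact k)"
proof (rule has_bochner_integral_nn_integral)
  show "(\<integral>\<^sup>+x. ennreal (indicator {0..a} x * (x^k * exp (-x))) \<partial>lborel) =
     ennreal ((1 - (\<Sum>n\<le>k. (a^n * exp (-a)) / fact n)) * fact k)"
    using nn_intergal_power_times_exp_Icc[of a k, OF assms]
    by (simp add: indicator_mult_ennreal mult.commute)
  have "0 \<le> erlang_CDF k 1 a" by simp
  then show "0 \<le> (1 - (\<Sum>n\<le>k. (a^n * exp (-a)) / fact n)) * fact k"
    using assms by (simp add: erlang_CDF_def)
qed (auto split: split_indicator)

lemma meas[measurable]: "sslud_density \<nu> \<in> borel_measurable borel"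
  unfolding sslud_density_def by measurable

lemma integ_bound: "integrable lborel (\<lambda>x::real. exp (- \<bar>x\<bar>) * \<bar>x\<bar>^n)"
proof -
  have "has_bochner_integral lborel (\<lambda>x::real. exp (- \<bar>x\<bar>) * \<bar>x\<bar>^n) (2 *\<^sub>R fact n)"
  proof (rule has_bochner_integral_even_function)
    show "has_bochner_integral lborel (\<lambda>x::real. indicator {0..} x *\<^sub>R (exp (- \<bar>x\<bar>) * \<bar>x\<bar>^n)) (fact n)"
      using P1[of n] by (rule has_bochner_integral_cong[THEN iffD1, rotated 3]) (auto split: split_indicator)
  qed simp
  then show ?thesis by (auto simp: has_bochner_integral_iff)
qed

lemma dens_bound: "\<bar>sslud_density \<nu> x\<bar> \<le> exp (- \<bar>x\<bar>)"
proof -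
  have e: "x/(2*\<nu>) + 1/2 = (x/\<nu> + 1)/2" by (simp add: field_simps)
  show ?thesis unfolding sslud_density_def e
    by (auto simp: abs_mult mult_le_cancel_left1)
qed

lemma F_integrable: "integrable lborel (\<lambda>x. sslud_density \<nu> x * x^n)"
proof (rule Bochner_Integration.integrable_bound[OF integ_bound[of n]])
  show "AE x in lborel. norm (sslud_density \<nu> x * x^n) \<le> norm (exp (- \<bar>x\<bar>) * \<bar>x\<bar>^n)"
    using dens_bound by (auto simp: abs_mult power_abs intro!: mult_right_mono)
qed measurable

lemma sym_reduce:
  fixes F :: "real \<Rightarrow> real"
  assumes F: "integrable lborel F"
    and I: "has_bochner_integral lborel (\<lambda>x. indicator {0..} x * (F x + F (-x))) I"
  shows "has_bochner_integral lborel F I"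
proof -
  define E where "E x = (F x + F (-x)) / 2" for x
  define Od where "Od x = (F x - F (-x)) / 2" for x
  have Fm: "integrable lborel (\<lambda>x. F (- x))"
    using lborel_integrable_real_affine_iff[of "-1" F 0] F by simp
  have "has_bochner_integral lborel (\<lambda>x. indicator {0..} x * (F x + F (-x)) / 2) (I / 2)"
    using I by (rule has_bochner_integral_divide_zero)
  then have "has_bochner_integral lborel (\<lambda>x. indicator {0..} x *\<^sub>R E x) (I / 2)"
    by (simp add: E_def)
  then have hE: "has_bochner_integral lborel E (2 *\<^sub>R (I/2))"
    by (rule has_bochner_integral_even_function) (simp add: E_def)
  have "integrable lborel Od"
    unfolding Od_def using F Fm by auto
  then have "integrable lborel (\<lambda>x. indicator {0..} x *\<^sub>R Od x)"
    by (rule integrable_mult_indicator[rotated]) simp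
  then have "has_bochner_integral lborel (\<lambda>x. indicator {0..} x *\<^sub>R Od x) (integral\<^sup>L lborel (\<lambda>x. indicator {0..} x *\<^sub>R Od x))"
    by (rule has_bochner_integral_integrable)
  moreover have "\<And>x. Od (-x) = - Od x" unfolding Od_def by (simp add: field_simps)
  ultimately have hO: "has_bochner_integral lborel Od 0"
    by (rule has_bochner_integral_odd_function)
  have "has_bochner_integral lborel (\<lambda>x. E x + Od x) (2 *\<^sub>R (I/2) + 0)"
    using hE hO by (rule has_bochner_integral_add)
  moreover have "(\<lambda>x. E x + Od x) = F" by (auto simp: E_def Od_def field_simps)
  ultimately show ?thesis by simp
qed

lemma g_pos:
  assumes "0 < \<nu>" "0 \<le> x"
  shows "sslud_density \<nu> x = (if x < \<nu> then exp (-x) * (x/(2*\<nu>)+1/2) else exp (-x))"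
    and "sslud_density \<nu> (-x) = (if \<nu> < x then 0 else exp (-x) * (1/2 - x/(2*\<nu>)))"
  using assms by (auto simp: sslud_density_def divide_less_eq less_divide_eq field_simps)

definition A :: "real \<Rightarrow> nat \<Rightarrow> real" where
  "A a k = (1 - (\<Sum>n\<le>k. (a^n * exp (-a)) / fact n)) * fact k"

lemma mom_even:
  assumes "0 < \<nu>" "even n"
  shows "has_bochner_integral lborel (\<lambda>x. sslud_density \<nu> x * x^n) (fact n)"
proof (rule sym_reduce[OF F_integrable])
  have "(\<lambda>x. indicator {0..} x * (sslud_density \<nu> x * x ^ n + sslud_density \<nu> (- x) * (- x) ^ n))
     = (\<lambda>x::real. indicator {0..} x * (x^n * exp (-x)))"
  proof
    fix x :: real
    show "indicator {0..} x * (sslud_density \<nu> x * x ^ n + sslud_density \<nu> (- x) * (- x) ^ n)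
     = indicator {0..} x * (x^n * exp (-x))"
    proof (cases "0 \<le> x")
      case True
      then show ?thesis using assms g_pos[OF assms(1) True]
        by (auto simp: field_simps)
    qed simp
  qed
  then show "has_bochner_integral lborel (\<lambda>x. indicator {0..} x * (sslud_density \<nu> x * x ^ n + sslud_density \<nu> (- x) * (- x) ^ n)) (fact n)"
    using P1[of n] by simp
qed

lemma mom_odd:
  assumes "0 < \<nu>" "odd n"
  shows "has_bochner_integral lborel (\<lambda>x. sslud_density \<nu> x * x^n) (A \<nu> (Suc n) / \<nu> + fact n - A \<nu> n)"
proof (rule sym_reduce[OF F_integrable])
  have "(\<lambda>x. indicator {0..} x * (sslud_density \<nu> x * x ^ n + sslud_density \<nu> (- x) * (- x) ^ n))
     = (\<lambda>x::real. indicator {0..\<nu>} x * (x^Suc n * exp (-x)) / \<nu> + indicator {0..} x * (x^n * exp (-x))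
          - indicator {0..\<nu>} x * (x^n * exp (-x)))"
  proof
    fix x :: real
    show "indicator {0..} x * (sslud_density \<nu> x * x ^ n + sslud_density \<nu> (- x) * (- x) ^ n)
     = indicator {0..\<nu>} x * (x^Suc n * exp (-x)) / \<nu> + indicator {0..} x * (x^n * exp (-x))
          - indicator {0..\<nu>} x * (x^n * exp (-x))"
    proof (cases "0 \<le> x")
      case True
      then show ?thesis using assms g_pos[OF assms(1) True]
        by (auto simp: field_simps split: split_indicator)
    qed simp
  qed
  moreover have "has_bochner_integral lborel (\<lambda>x::real. indicator {0..\<nu>} x * (x^Suc n * exp (-x)) / \<nu> + indicator {0..} x * (x^n * exp (-x))
          - indicator {0..\<nu>} x * (x^n * exp (-x))) (A \<nu> (Suc n) / \<nu> + fact n - A \<nu> n)"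
    unfolding A_def using assms
    by (intro has_bochner_integral_diff has_bochner_integral_add has_bochner_integral_divide_zero P1 P2) auto
  ultimately show "has_bochner_integral lborel (\<lambda>x. indicator {0..} x * (sslud_density \<nu> x * x ^ n + sslud_density \<nu> (- x) * (- x) ^ n)) (A \<nu> (Suc n) / \<nu> + fact n - A \<nu> n)"
    by simp
qed

lemma g_neg: "sslud_density (-\<mu>) (-x) = sslud_density \<mu> x"
  by (simp add: sslud_density_def)

lemma g_nonneg: "0 \<le> sslud_density \<mu> x"
proof -
  have e: "x/(2*\<mu>) + 1/2 = (x/\<mu> + 1)/2" by (simp add: field_simps)
  show ?thesis unfolding sslud_density_def e by auto
qed

definition Mom :: "real \<Rightarrow> nat \<Rightarrow> real" where
  "Mom \<nu> n = (if even n then fact n else A \<nu> (Suc n) / \<nu> + fact n - A \<nu> n)"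

lemma mom_pos: "0 < \<nu> \<Longrightarrow> has_bochner_integral lborel (\<lambda>x. sslud_density \<nu> x * x^n) (Mom \<nu> n)"
  unfolding Mom_def using mom_even mom_odd by auto

lemma mom_neg:
  assumes "\<mu> < 0"
  shows "has_bochner_integral lborel (\<lambda>x. sslud_density \<mu> x * x^n) ((-1)^n * Mom (-\<mu>) n)"
proof -
  have "has_bochner_integral lborel (\<lambda>x. sslud_density (-\<mu>) x * x^n) (Mom (-\<mu>) n)"
    using assms by (intro mom_pos) simp
  then have "has_bochner_integral lborel (\<lambda>x. sslud_density (-\<mu>) (0 + (-1) * x) * (0 + (-1) * x)^n) (Mom (-\<mu>) n /\<^sub>R \<bar>-1\<bar>)"
    using lborel_has_bochner_integral_real_affine_iff[of "-1" "\<lambda>x. sslud_density (-\<mu>) x * x^n" "Mom (-\<mu>) n" 0]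
    by simp
  moreover have "(\<lambda>x. sslud_density (-\<mu>) (0 + (-1) * x) * (0 + (-1) * x)^n) = (\<lambda>x. (-1)^n * (sslud_density \<mu> x * x^n))"
  proof
    fix x :: real
    have "(0 + (-1) * x)^n = (-1)^n * x^n" by (simp add: power_mult_distrib[symmetric])
    then show "sslud_density (-\<mu>) (0 + (-1) * x) * (0 + (-1) * x)^n = (-1)^n * (sslud_density \<mu> x * x^n)"
      using g_neg[of \<mu> x] by simp
  qed
  ultimately have "has_bochner_integral lborel (\<lambda>x. (-1)^n * (sslud_density \<mu> x * x^n)) (Mom (-\<mu>) n)"
    by simp
  then have "has_bochner_integral lborel (\<lambda>x. (-1)^n * ((-1)^n * (sslud_density \<mu> x * x^n))) ((-1)^n * Mom (-\<mu>) n)"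
    by (rule has_bochner_integral_mult_right)
  moreover have "(\<lambda>x. (-1)^n * ((-1)^n * (sslud_density \<mu> x * x^n))) = (\<lambda>x. sslud_density \<mu> x * x^n)"
  proof
    fix x :: real
    have "(-1::real)^n * (-1)^n = 1" by (simp flip: power_add add: power_even_eq[symmetric]) 
    then show "(-1)^n * ((-1)^n * (sslud_density \<mu> x * x^n)) = sslud_density \<mu> x * x^n"
      by (simp only: mult.assoc[symmetric])
  qed
  ultimately show ?thesis by simp
qed

lemma A1: "A a 1 = 1 - exp (-a) - a * exp (-a)"
  by (simp add: A_def)
lemma A2: "A a 2 = 2 - 2*exp (-a) - 2*a * exp (-a) - a^2 * exp(-a)"
  by (simp add: A_def eval_nat_numeral algebra_simps)

lemma A3: "A a 3 = 6 - 6*exp (-a) - 6*a * exp (-a) - 3*a^2 * exp(-a) - a^3 * exp(-a)"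
  by (simp add: A_def eval_nat_numeral algebra_simps)
lemma A4: "A a 4 = 24 - 24*exp (-a) - 24*a * exp (-a) - 12*a^2 * exp(-a) - 4*a^3 * exp(-a) - a^4 * exp(-a)"
  by (simp add: A_def eval_nat_numeral algebra_simps)

lemma fact34: "fact 3 = (6::real)" "fact 4 = (24::real)" "fact 2 = (2::real)"
  by (simp_all add: eval_nat_numeral)

lemma Mom1: "Mom \<nu> 1 = 2 / \<nu> - (1 + 2 / \<nu>) * exp (- \<nu>)" if "0 < \<nu>"
proof -
  have "Mom \<nu> 1 = A \<nu> 2 / \<nu> + 1 - A \<nu> 1" by (simp add: Mom_def numeral_2_eq_2)
  also have "\<dots> = 2 / \<nu> - (1 + 2 / \<nu>) * exp (- \<nu>)"
    unfolding A1 A2 using that by (simp add: field_simps power2_eq_square)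
  finally show ?thesis .
qed

lemma Mom3: "Mom \<nu> 3 = 24 / \<nu> - exp (- \<nu>) * (\<nu>^2 + 6 * \<nu> + 18 + 24 / \<nu>)" if "0 < \<nu>"
proof -
  have "Mom \<nu> 3 = A \<nu> 4 / \<nu> + 6 - A \<nu> 3" by (simp add: Mom_def fact34)
  also have "\<dots> = 24 / \<nu> - exp (- \<nu>) * (\<nu>^2 + 6 * \<nu> + 18 + 24 / \<nu>)"
    unfolding A3 A4 using that by (simp add: field_simps power2_eq_square power3_eq_cube eval_nat_numeral)
  finally show ?thesis .
qed

lemma mom_int:
  assumes "\<mu> \<noteq> 0"
  shows "integral\<^sup>L lborel (\<lambda>x. sslud_density \<mu> x * x^n) = (if 0 < \<mu> then Mom \<mu> n else (-1)^n * Mom (-\<mu>) n)"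
proof (cases "0 < \<mu>")
  case True then show ?thesis using mom_pos[OF True, of n] by (simp add: has_bochner_integral_integral_eq)
next
  case False
  then have "\<mu> < 0" using assms by simp
  then show ?thesis using mom_neg[of \<mu> n] False by (simp add: has_bochner_integral_integral_eq)
qed

theorem mainTheorem3:
  fixes M :: "'a measure" and X :: "'a \<Rightarrow> real" and \<mu> :: real
  assumes "prob_space M"
    and "\<mu> \<noteq> 0"
    and "distributed M lborel X (\<lambda>x. ennreal (sslud_density \<mu> x))"
  shows "(\<mu> > 0 \<longrightarrow>
            (\<integral>\<omega>. X \<omega> ^ 1 \<partial>M) = 2 / \<mu> - (1 + 2 / \<mu>) * exp (- \<mu>) \<and>
            (\<integral>\<omega>. X \<omega> ^ 2 \<partial>M) = 2 \<and>
            (\<integral>\<omega>. X \<omega> ^ 3 \<partial>M) = 24 / \<mu> - exp (- \<mu>) * (\<mu>^2 + 6 * \<mu> + 18 + 24 / \<mu>) \<and>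
            (\<integral>\<omega>. X \<omega> ^ 4 \<partial>M) = 24)
       \<and> (\<mu> < 0 \<longrightarrow>
            (\<integral>\<omega>. X \<omega> ^ 1 \<partial>M) = - (2 / (- \<mu>) - (1 + 2 / (- \<mu>)) * exp (- (- \<mu>))) \<and>
            (\<integral>\<omega>. X \<omega> ^ 2 \<partial>M) = 2 \<and>
            (\<integral>\<omega>. X \<omega> ^ 3 \<partial>M) =
               - (24 / (- \<mu>) - exp (- (- \<mu>)) * ((- \<mu>)^2 + 6 * (- \<mu>) + 18 + 24 / (- \<mu>))) \<and>
            (\<integral>\<omega>. X \<omega> ^ 4 \<partial>M) = 24)
       \<and> (\<forall>r::nat. r \<ge> 1 \<longrightarrow> (\<integral>\<omega>. X \<omega> ^ (2 * r) \<partial>M) = fact (2 * r))"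
proof -
  have E: "(\<integral>\<omega>. X \<omega> ^ n \<partial>M) = (if 0 < \<mu> then Mom \<mu> n else (-1)^n * Mom (-\<mu>) n)" for n
  proof -
    have "(\<integral>\<omega>. X \<omega> ^ n \<partial>M) = integral\<^sup>L lborel (\<lambda>x. sslud_density \<mu> x * x^n)"
      using distributed_integral[OF assms(3), of "\<lambda>x. x^n"] g_nonneg by simp
    then show ?thesis using mom_int[OF assms(2)] by simp
  qed
  have ev: "Mom \<nu> (2*r) = fact (2*r)" for \<nu> r by (simp add: Mom_def)
  have ev2: "Mom \<nu> 2 = 2" "Mom \<nu> 4 = 24" for \<nu> using ev[of \<nu> 1] ev[of \<nu> 2] by (simp_all add: fact34)
  show ?thesis
  proof (cases "0 < \<mu>")
    case True
    then show ?thesis unfolding E using Mom1[OF True] Mom3[OF True] ev2 ev by simp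
  next
    case False
    then have n: "0 < - \<mu>" using assms(2) by simp
    show ?thesis unfolding E using False Mom1[OF n] Mom3[OF n] ev2 ev by simp
  qed
qed

end
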